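(* Let $\mathbf L$ be an algebraic lattice with an equa-interior operator $\eta$. If $x,z_1,\dots,z_k,a_1,\dots,a_k$ are coatoms of $\mathbf L$ such that $x\wedge z_i\le a_i$ properly for each $i=1,\dots,k$, then $\eta(x)\vee\bigwedge_{i=1}^k z_i=1$.
   Context: An equa-interior operator on an algebraic lattice $\mathbf L$ is a map $\eta:L\to L$ such that for all $x,y,z\in L$: (I1) $\eta(x)\le x$; (I2) $x\ge y$ implies $\eta(x)\ge\eta(y)$; (I3) $\eta^2(x)=\eta(x)$; (I4) $\eta(1)=1$; (I5) if $\eta(x)=u$ for all $x\in X\subseteq L$ then $\eta(\bigvee X)=u$; (I6) $\eta(x)\vee(y\wedge z)=(\eta(x)\vee y)\wedge(\eta(x)\vee z)$; (I7) the image $\eta(L)$ is the complete join subsemilattice of $L$ generated by the elements of $\eta(L)$ that are compact in $\mathbf L$; (I8) there is a compact element $w\in L$ with $\eta(w)=w$ such that the interval $[w,1]$ is isomorphic to the congruence lattice of a join semilattice with $0$. For coatoms, "$x\wedge z\le a$ properly" means $x\wedge z\le a$ while $x\not\le a$ and $z\not\le a$. *)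

theory Defs
  imports Main
begin

definition compact_el :: "'a::complete_lattice \<Rightarrow> bool" where
  "compact_el c \<longleftrightarrow> (\<forall>A. c \<le> Sup A \<longrightarrow> (\<exists>F. finite F \<and> F \<subseteq> A \<and> c \<le> Sup F))"

definition algebraic_lattice :: "'a::complete_lattice itself \<Rightarrow> bool" where
  "algebraic_lattice _ \<longleftrightarrow> (\<forall>x::'a. x = Sup {c. compact_el c \<and> c \<le> x})"

definition coatom :: "'a::complete_lattice \<Rightarrow> bool" where
  "coatom a \<longleftrightarrow> a < top \<and> (\<forall>y. a \<le> y \<longrightarrow> y = a \<or> y = top)"

definition join_semilattice_0 :: "'b set \<Rightarrow> ('b \<Rightarrow> 'b \<Rightarrow> 'b) \<Rightarrow> 'b \<Rightarrow> bool" where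
  "join_semilattice_0 S j e \<longleftrightarrow>
     (\<forall>a\<in>S. \<forall>b\<in>S. j a b \<in> S) \<and> e \<in> S \<and>
     (\<forall>a\<in>S. \<forall>b\<in>S. \<forall>c\<in>S. j (j a b) c = j a (j b c)) \<and>
     (\<forall>a\<in>S. \<forall>b\<in>S. j a b = j b a) \<and>
     (\<forall>a\<in>S. j a a = a) \<and>
     (\<forall>a\<in>S. j e a = a)"

definition semilattice_congruences :: "'b set \<Rightarrow> ('b \<Rightarrow> 'b \<Rightarrow> 'b) \<Rightarrow> ('b \<times> 'b) set set" where
  "semilattice_congruences S j =
     {\<theta>. equiv S \<theta> \<and>
          (\<forall>a b c d. (a, b) \<in> \<theta> \<longrightarrow> (c, d) \<in> \<theta> \<longrightarrow> (j a c, j b d) \<in> \<theta>)}"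

definition order_iso_to_sets :: "'a::order set \<Rightarrow> 'c set set \<Rightarrow> bool" where
  "order_iso_to_sets A B \<longleftrightarrow>
     (\<exists>f. bij_betw f A B \<and> (\<forall>x\<in>A. \<forall>y\<in>A. x \<le> y \<longleftrightarrow> f x \<subseteq> f y))"

definition equa_interior :: "'b itself \<Rightarrow> ('a::complete_lattice \<Rightarrow> 'a) \<Rightarrow> bool" where
  "equa_interior _ \<eta> \<longleftrightarrow>
     (\<forall>x. \<eta> x \<le> x) \<and>
     (\<forall>x y. y \<le> x \<longrightarrow> \<eta> y \<le> \<eta> x) \<and>
     (\<forall>x. \<eta> (\<eta> x) = \<eta> x) \<and>
     \<eta> top = top \<and>
     (\<forall>X u. X \<noteq> {} \<longrightarrow> (\<forall>x\<in>X. \<eta> x = u) \<longrightarrow> \<eta> (Sup X) = u) \<and>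
     (\<forall>x y z. sup (\<eta> x) (inf y z) = inf (sup (\<eta> x) y) (sup (\<eta> x) z)) \<and>
     range \<eta> = {Sup C | C. C \<subseteq> {c \<in> range \<eta>. compact_el c}} \<and>
     (\<exists>w. compact_el w \<and> \<eta> w = w \<and>
        (\<exists>(S::'b set) j e. join_semilattice_0 S j e \<and>
           order_iso_to_sets {w..top} (semilattice_congruences S j)))"

end

theory Submission
  imports Defs
begin

lemma fin_dist:
  fixes u :: "'a::complete_lattice"
  assumes D: "\<And>y z. sup u (inf y z) = inf (sup u y) (sup u z)"
    and "finite F" and "\<forall>y\<in>F. sup u y = top"
  shows "sup u (Inf F) = top"
  using assms(2,3)
proof (induction F rule: finite_induct)
  case empty then show ?case by simp
next
  case (insert y F) then show ?case by (simp add: D)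
qed

lemma coatom_join:
  fixes x y :: "'a::complete_lattice"
  assumes "coatom x" "\<not> y \<le> x" shows "sup x y = top"
  using assms unfolding coatom_def by (metis sup.cobounded1 sup.cobounded2)

theorem theorem7p3:
  fixes \<eta> :: "'a::complete_lattice \<Rightarrow> 'a"
    and x :: 'a and z a :: "nat \<Rightarrow> 'a" and k :: nat
  assumes "algebraic_lattice TYPE('a)"
    and "equa_interior TYPE('b) \<eta>"
    and "coatom x"
    and "\<forall>i\<in>{1..k}. coatom (z i) \<and> coatom (a i)"
    and "\<forall>i\<in>{1..k}. inf x (z i) \<le> a i \<and> \<not> x \<le> a i \<and> \<not> z i \<le> a i"
  shows "sup (\<eta> x) (Inf (z ` {1..k})) = top"
proof -
  have I1: "\<And>x. \<eta> x \<le> x" and I2: "\<And>x y. y \<le> x \<Longrightarrow> \<eta> y \<le> \<eta> x"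
    and I3: "\<And>x. \<eta> (\<eta> x) = \<eta> x" and I4: "\<eta> top = top"
    and I5: "\<And>X u. X \<noteq> {} \<Longrightarrow> (\<forall>x\<in>X. \<eta> x = u) \<Longrightarrow> \<eta> (Sup X) = u"
    and I6: "\<And>x y z. sup (\<eta> x) (inf y z) = inf (sup (\<eta> x) y) (sup (\<eta> x) z)"
    using assms(2) unfolding equa_interior_def by simp_all
  have xT: "x < top" using assms(3) unfolding coatom_def by blast
  have each: "sup (\<eta> x) (z i) = top" if i: "i \<in> {1..k}" for i
  proof (rule ccontr)
    assume ne: "sup (\<eta> x) (z i) \<noteq> top"
    have cz: "coatom (z i)" and ca: "coatom (a i)" using assms(4) i by auto
    have h1: "inf x (z i) \<le> a i" and h2: "\<not> x \<le> a i" and h3: "\<not> z i \<le> a i"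
      using assms(5) i by auto
    have "sup (\<eta> x) (z i) = z i" using cz ne unfolding coatom_def
      by (metis sup.cobounded2 sup_commute)
    hence uz: "\<eta> x \<le> z i" by (metis sup.orderI sup_commute)
    have ux: "\<eta> x \<le> x" by (rule I1)
    have ua: "\<eta> x \<le> a i" using uz ux h1 by (meson le_inf_iff order_trans)
    show False
    proof (cases "\<eta> (a i) \<le> x")
      case True
      have "\<eta> (a i) \<le> \<eta> x" using I2[OF True] I3 by metis
      moreover have "\<eta> x \<le> \<eta> (a i)" using I2[OF ua] I3 by metis
      ultimately have eq: "\<eta> (a i) = \<eta> x" by simp
      have "\<eta> (Sup {x, a i}) = \<eta> x" using I5[of "{x, a i}" "\<eta> x"] eq by auto
      moreover have "\<not> a i \<le> x" using ca h2 xT unfolding coatom_def by blast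
      hence "sup x (a i) = top" using coatom_join[OF assms(3)] by blast
      ultimately have "\<eta> x = top" using I4 by simp
      thus False using ux xT by simp
    next
      case False
      hence "sup x (\<eta> (a i)) = top" using coatom_join[OF assms(3)] by blast
      hence "sup (\<eta> (a i)) x = top" by (simp add: sup_commute)
      hence "sup (\<eta> (a i)) (inf x (z i)) = sup (\<eta> (a i)) (z i)" using I6 by simp
      moreover have "sup (\<eta> (a i)) (inf x (z i)) \<le> a i" using I1 h1 by simp
      ultimately show False using h3 by simp
    qed
  qed
  show ?thesis
    by (rule fin_dist) (use I6 each in auto)
qed

end
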